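(* Let $p$ be an odd prime, $k\ge1$, and write $\phi(p^k)=2^\theta\mu$ with $\mu$ odd. For every integer $r\ge1$, the graph $\mathcal{U}_{p^k}$ has a connected component isomorphic to $C_r(T_2^\theta)$ if and only if $\mu$ is divisible by some triggering divisor of $r$.
   Context: $\mathcal{G}_{n}$ is the directed graph on $\{0,\dots,n-1\}$ with an edge $x\to x^2\bmod n$ for each $x$, and $\mathcal{U}_n$ is its subgraph induced on the units mod $n$. $\phi$ is Euler's totient function. For odd $d\ge1$, $\mathrm{ord}_d(2)$ is the least positive integer $r$ with $d\mid 2^r-1$. A positive odd integer $d$ is a triggering divisor for $r$ if $\mathrm{ord}_d(2)=r$ and $\mathrm{ord}_e(2)\neq r$ for every proper positive divisor $e$ of $d$. The regular grounded tree $T_w^\ell$ has $w^\ell$ vertices in layers $0,\dots,\ell$. Layer $0$ is the root, which has a loop. Layer $1$ has $w-1$ vertices mapping to the root. Each vertex of layer $j$, $1\le j<\ell$, has exactly $w$ vertices of layer $j+1$ mapping to it. Layer $\ell$ consists of leaves. For a grounded tree $T$ and $\alpha\ge1$, the flower cycle $C_\alpha(T)$ is built as follows: take $\alpha$ disjoint copies of $T$, delete the root loops, and join the roots by edges root$_i\to$root$_{i+1 \bmod \alpha}$. *)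

theory Defs
  imports "HOL-Number_Theory.Number_Theory"
begin

type_synonym 'a digraph = "'a set \<times> ('a \<times> 'a) set"

definition sq_graph :: "nat \<Rightarrow> nat digraph" where
  "sq_graph n = ({0..<n}, {(x, x^2 mod n) | x. x < n})"

definition induced :: "'a digraph \<Rightarrow> 'a set \<Rightarrow> 'a digraph" where
  "induced G S = (fst G \<inter> S, {(x, y) \<in> snd G. x \<in> S \<and> y \<in> S})"

definition unit_graph :: "nat \<Rightarrow> nat digraph" where
  "unit_graph n = induced (sq_graph n) {x. x < n \<and> coprime x n}"

definition component :: "'a digraph \<Rightarrow> 'a \<Rightarrow> 'a set" where
  "component G x =
     {y \<in> fst G. (x, y) \<in> ({(u, v) \<in> snd G. u \<in> fst G \<and> v \<in> fst G}
                      \<union> {(u, v) \<in> snd G. u \<in> fst G \<and> v \<in> fst G}\<inverse>)\<^sup>*}"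

definition connected_components :: "'a digraph \<Rightarrow> 'a set set" where
  "connected_components G = component G ` fst G"

definition digraph_iso :: "'a digraph \<Rightarrow> 'b digraph \<Rightarrow> bool" where
  "digraph_iso G H \<longleftrightarrow>
     (\<exists>h. bij_betw h (fst G) (fst H) \<and>
          (\<forall>x\<in>fst G. \<forall>y\<in>fst G. (x, y) \<in> snd G \<longleftrightarrow> (h x, h y) \<in> snd H))"

definition has_component_iso :: "'a digraph \<Rightarrow> 'b digraph \<Rightarrow> bool" where
  "has_component_iso G H \<longleftrightarrow>
     (\<exists>C\<in>connected_components G. digraph_iso (induced G C) H)"

type_synonym 'a gtree = "'a set \<times> ('a \<times> 'a) set \<times> 'a"

text \<open>Vertices are lists of length \<le> l; the root is [];
  a layer-1 vertex is [a] with 1 \<le> a < w; a layer-(j+1) vertex is xs @ [b] with b < w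
  for xs of layer j \<ge> 1.  Each non-root vertex maps to its butlast; the root has a loop.\<close>
definition reg_tree_vertices :: "nat \<Rightarrow> nat \<Rightarrow> nat list set" where
  "reg_tree_vertices w l =
     {xs. length xs \<le> l \<and> (xs \<noteq> [] \<longrightarrow> 1 \<le> hd xs \<and> (\<forall>a\<in>set xs. a < w))}"

definition reg_tree :: "nat \<Rightarrow> nat \<Rightarrow> nat list gtree" where
  "reg_tree w l = (reg_tree_vertices w l,
                   {(xs, butlast xs) | xs. xs \<in> reg_tree_vertices w l}, [])"

text \<open>Flower cycle C_\<alpha>(T): \<alpha> copies of T (indexed by 0..\<alpha>-1), root loops deleted,
  roots joined by root_i -> root_{(i+1) mod \<alpha>}.\<close>
definition flower_cycle :: "nat \<Rightarrow> 'a gtree \<Rightarrow> (nat \<times> 'a) digraph" where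
  "flower_cycle \<alpha> T = (case T of (V, E, rt) \<Rightarrow>
     ({0..<\<alpha>} \<times> V,
      {((i, u), (i, v)) | i u v. i < \<alpha> \<and> (u, v) \<in> E \<and> u \<noteq> rt}
      \<union> {((i, rt), ((i + 1) mod \<alpha>, rt)) | i. i < \<alpha>}))"

definition triggering_divisor :: "nat \<Rightarrow> nat \<Rightarrow> bool" where
  "triggering_divisor d r \<longleftrightarrow>
     d > 0 \<and> odd d \<and> ord d 2 = r \<and> (\<forall>e. e > 0 \<and> e dvd d \<and> e \<noteq> d \<longrightarrow> ord e 2 \<noteq> r)"

end

theory Submission
  imports Defs
begin


definition fsucc :: "nat \<Rightarrow> nat \<times> nat list \<Rightarrow> nat \<times> nat list" where
  "fsucc r u = (if snd u = [] then ((fst u + 1) mod r, []) else (fst u, butlast (snd u)))"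

lemma flower_fst: "fst (flower_cycle r (reg_tree 2 t)) = {0..<r} \<times> reg_tree_vertices 2 t"
  by (simp add: flower_cycle_def reg_tree_def)

lemma nil_in_V: "[] \<in> reg_tree_vertices w t"
  by (simp add: reg_tree_vertices_def)

lemma butlast_in_V: assumes "xs \<in> reg_tree_vertices w t" shows "butlast xs \<in> reg_tree_vertices w t"
proof -
  have "hd (butlast xs) = hd xs" if "butlast xs \<noteq> []"
    using that by (cases xs) auto
  then show ?thesis using assms
    by (auto simp: reg_tree_vertices_def dest: in_set_butlastD)
qed

lemma flower_snd: "snd (flower_cycle r (reg_tree 2 t)) =
   {(u, fsucc r u) | u. u \<in> {0..<r} \<times> reg_tree_vertices 2 t}"
  unfolding flower_cycle_def reg_tree_def fsucc_def
  using nil_in_V[of 2 t]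
  by (auto 0 4)

lemma fsucc_in: "u \<in> {0..<r} \<times> reg_tree_vertices 2 t \<Longrightarrow> fsucc r u \<in> {0..<r} \<times> reg_tree_vertices 2 t"
  by (auto simp: fsucc_def nil_in_V butlast_in_V)

lemma unit_graph_eq: "unit_graph n = ({x. x < n \<and> coprime x n}, {(x, x^2 mod n) | x. x < n \<and> coprime x n})"
proof -
  have "coprime (x^2 mod n) n" if "coprime x n" for x
    using that by (metis coprime_mod_left_iff coprime_power_left_iff gcd_nat.absorb_iff2 gcd_nat.simps(1)
        mod_by_0 mod_div_trivial nat_dvd_not_less not_gr_zero)
  moreover have "x^2 mod n < n" if "x < n" for x using that by auto
  ultimately show ?thesis
    unfolding unit_graph_def induced_def sq_graph_def by auto
qed



lemma comp_iso:
  fixes h :: "'b \<Rightarrow> 'a" and G :: "'a digraph" and H :: "'b digraph"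
  assumes G: "G = (U, {(x, f x) | x. x \<in> U})" and fU: "\<forall>x\<in>U. f x \<in> U"
  and H: "H = (W, {(u, sc u) | u. u \<in> W})" and scW: "\<forall>u\<in>W. sc u \<in> W"
  and inj: "inj_on h W" and hU: "h ` W \<subseteq> U" and hs: "\<forall>u\<in>W. h (sc u) = f (h u)"
  and u0: "u0 \<in> W" and conn: "\<forall>u\<in>W. (u, u0) \<in> {(u, sc u) | u. u \<in> W}\<^sup>*"
  and pred: "\<forall>u\<in>W. \<forall>z\<in>U. f z = h u \<longrightarrow> z \<in> h ` W"
  shows "has_component_iso G H"
proof -
  define R where "R = {(u, v) \<in> snd G. u \<in> fst G \<and> v \<in> fst G}"
  have R: "R = {(x, f x) | x. x \<in> U}" using fU by (auto simp: R_def G)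
  define x0 where "x0 = h u0"
  define C where "C = component G x0"
  have Cdef: "C = {y \<in> U. (x0, y) \<in> (R \<union> R\<inverse>)\<^sup>*}"
    unfolding C_def component_def R_def by (simp add: G)
  have sub1: "y \<in> h ` W" if "(x0, y) \<in> (R \<union> R\<inverse>)\<^sup>*" for y
    using that
  proof (induction rule: rtrancl_induct)
    case base then show ?case using u0 by (simp add: x0_def)
  next
    case (step y z)
    then obtain u where u: "u \<in> W" "y = h u" by auto
    from step(2) show ?case
    proof
      assume "(y, z) \<in> R"
      then have "z = f y" by (auto simp: R)
      then show ?thesis using u hs scW by (metis image_eqI)
    next
      assume "(y, z) \<in> R\<inverse>"
      then have "y = f z" "z \<in> U" by (auto simp: R)
      then show ?thesis using pred u by blast
    qed
  qed
  have reach: "(h u, h u0) \<in> R\<^sup>*" if "u \<in> W" for u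
  proof -
    have "(u, u0) \<in> {(u, sc u) | u. u \<in> W}\<^sup>*" using conn that by blast
    then show ?thesis
    proof (induction rule: converse_rtrancl_induct)
      case base then show ?case by simp
    next
      case (step y z)
      then have "y \<in> W" "z = sc y" by auto
      then have "(h y, h z) \<in> R" using hs hU by (auto simp: R)
      then show ?case using step by (meson converse_rtrancl_into_rtrancl)
    qed
  qed
  have CeqW: "C = h ` W"
  proof
    show "C \<subseteq> h ` W" using sub1 Cdef by blast
  next
    show "h ` W \<subseteq> C"
    proof
      fix y assume "y \<in> h ` W"
      then obtain u where u: "u \<in> W" "y = h u" by auto
      have "(h u, x0) \<in> R\<^sup>*" using reach u x0_def by simp
      then have "(x0, h u) \<in> (R\<inverse>)\<^sup>*" by (simp add: rtrancl_converse)
      then have "(x0, h u) \<in> (R \<union> R\<inverse>)\<^sup>*" by (meson in_rtrancl_UnI)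
      then show "y \<in> C" using Cdef u hU by auto
    qed
  qed
  have Ccomp: "C \<in> connected_components G"
    unfolding connected_components_def C_def x0_def using u0 hU by (auto simp: G)
  have bij: "bij_betw (inv_into W h) (h ` W) W"
    using inj by (simp add: bij_betw_inv_into inj_on_imp_bij_betw)
  have iso: "digraph_iso (induced G C) H"
    unfolding digraph_iso_def
  proof (intro exI[of _ "inv_into W h"] conjI ballI)
    have "fst (induced G C) = h ` W" using CeqW hU by (auto simp: induced_def G)
    then show "bij_betw (inv_into W h) (fst (induced G C)) (fst H)" using bij H by simp
  next
    fix x y assume "x \<in> fst (induced G C)" "y \<in> fst (induced G C)"
    then obtain u v where uv: "u \<in> W" "v \<in> W" "x = h u" "y = h v"
      using CeqW by (auto simp: induced_def G)
    have "(x, y) \<in> snd (induced G C) \<longleftrightarrow> h v = f (h u)"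
      using uv CeqW hU by (auto simp: induced_def G)
    also have "\<dots> \<longleftrightarrow> v = sc u" using hs uv inj scW by (metis inj_onD)
    also have "\<dots> \<longleftrightarrow> (inv_into W h x, inv_into W h y) \<in> snd H"
      using uv inj by (auto simp: H)
    finally show "(x, y) \<in> snd (induced G C) \<longleftrightarrow> (inv_into W h x, inv_into W h y) \<in> snd H" .
  qed
  show ?thesis unfolding has_component_iso_def using Ccomp iso by blast
qed

lemma comp_cycle:
  fixes G :: "'a digraph" and H :: "'b digraph"
  assumes G: "G = (U, {(x, f x) | x. x \<in> U})"
  and iso: "has_component_iso G H" and r: "r \<ge> 1"
  and roots: "\<forall>i<r. \<rho> i \<in> fst H \<and> (\<rho> i, \<rho> ((i+1) mod r)) \<in> snd H"
  and rinj: "inj_on \<rho> {0..<r}"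
  shows "\<exists>x\<in>U. (f^^r) x = x \<and> (\<forall>j. 0<j \<and> j<r \<longrightarrow> (f^^j) x \<noteq> x)"
proof -
  obtain C where C: "C \<in> connected_components G" and di: "digraph_iso (induced G C) H"
    using iso unfolding has_component_iso_def by blast
  define A where "A = fst (induced G C)"
  obtain \<phi> where bij: "bij_betw \<phi> A (fst H)"
    and ed: "\<forall>x\<in>A. \<forall>y\<in>A. (x, y) \<in> snd (induced G C) \<longleftrightarrow> (\<phi> x, \<phi> y) \<in> snd H"
    using di unfolding digraph_iso_def A_def by blast
  define y where "y i = inv_into A \<phi> (\<rho> (i mod r))" for i
  have rin: "\<rho> (i mod r) \<in> fst H" for i using roots r by simp
  have yin: "y i \<in> A" for i
    unfolding y_def using bij_betw_inv_into[OF bij] rin[of i] bij_betwE by blast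
  have yphi: "\<phi> (y i) = \<rho> (i mod r)" for i
    unfolding y_def using bij_betw_inv_into_right[OF bij rin[of i]] .
  have ystep: "y (Suc i) = f (y i)" for i
  proof -
    have "(\<rho> (i mod r), \<rho> ((i mod r + 1) mod r)) \<in> snd H" using roots r by simp
    moreover have "(i mod r + 1) mod r = Suc i mod r" by (metis Suc_eq_plus1 mod_Suc_eq)
    ultimately have "(\<phi> (y i), \<phi> (y (Suc i))) \<in> snd H" unfolding yphi by metis
    then have "(y i, y (Suc i)) \<in> snd (induced G C)" using ed yin[of i] yin[of "Suc i"] by blast
    then have "(y i, y (Suc i)) \<in> snd G" by (simp add: induced_def)
    then show ?thesis by (simp add: G)
  qed
  have yj: "y j = (f^^j) (y 0)" for j
    by (induction j) (simp_all add: ystep)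
  have "y 0 \<in> U" using yin[of 0] by (simp add: A_def induced_def G)
  moreover have "(f^^r) (y 0) = y 0"
  proof -
    have "\<phi> (y r) = \<phi> (y 0)" using yphi by simp
    then have "y r = y 0" by (rule inj_onD[OF bij_betw_imp_inj_on[OF bij] _ yin yin])
    then show ?thesis using yj[of r] by simp
  qed
  moreover have "(f^^j) (y 0) \<noteq> y 0" if "0 < j" "j < r" for j
  proof
    assume "(f^^j) (y 0) = y 0"
    then have "\<phi> (y j) = \<phi> (y 0)" using yj[of j] by simp
    then have "\<rho> j = \<rho> 0" using yphi that by simp
    moreover have "j \<in> {0..<r}" "0 \<in> {0..<r}" using that by auto
    ultimately have "j = 0" by (rule inj_onD[OF rinj])
    then show False using that by simp
  qed
  ultimately show ?thesis by blast
qed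



lemma trig_exists: "D > 0 \<Longrightarrow> odd D \<Longrightarrow> ord D 2 = r \<Longrightarrow> \<exists>d. triggering_divisor d r \<and> d dvd D"
proof (induction D rule: less_induct)
  case (less D)
  show ?case
  proof (cases "triggering_divisor D r")
    case True then show ?thesis by (blast intro: dvd_refl)
  next
    case False
    then obtain e where e: "e > 0" "e dvd D" "e \<noteq> D" "ord e 2 = r"
      using less.prems unfolding triggering_divisor_def by blast
    have "e < D" using e less.prems by (meson dvd_imp_le le_neq_implies_less)
    moreover have "odd e" using e less.prems by (meson dvd_trans)
    ultimately obtain d where "triggering_divisor d r" "d dvd e" using less.IH e by blast
    then show ?thesis using e dvd_trans by blast
  qed
qed

lemma iter_sq: "((\<lambda>x. x^2 mod n)^^j) x = (if j = 0 then x else x^(2^j) mod (n::nat))"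
proof (induction j)
  case 0 then show ?case by simp
next
  case (Suc j)
  have e: "(x ^ 2 ^ j mod n)^2 mod n = x ^ (2 * 2 ^ j) mod n"
  proof -
    have "(x ^ 2 ^ j mod n)^2 mod n = (x^2^j)^2 mod n" by (rule power_mod)
    also have "(x^2^j)^2 = x ^ (2 * 2 ^ j)" by (simp add: power_mult[symmetric] mult.commute)
    finally show ?thesis .
  qed
  show ?case
  proof (cases "j = 0")
    case True then show ?thesis by simp
  next
    case False then show ?thesis using Suc e by simp
  qed
qed

lemma nt_forward:
  fixes n x r \<theta> \<mu> :: nat
  assumes cop: "coprime x n" and r: "r \<ge> 1"
    and cyc: "[x^(2^r) = x] (mod n)"
    and notcyc: "\<forall>j. 0<j \<and> j<r \<longrightarrow> \<not>[x^(2^j) = x] (mod n)"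
    and tot: "totient n = 2^\<theta> * \<mu>"
  shows "\<exists>d. triggering_divisor d r \<and> d dvd \<mu>"
proof -
  define D where "D = ord n x"
  have copn: "coprime n x" using cop by (simp add: coprime_commute)
  have eq: "[x^(2^j) = x] (mod n) \<longleftrightarrow> [2^j = 1] (mod D)" for j
    using order_divides_expdiff[OF copn, of "2^j" 1] by (simp add: D_def)
  have Dpos: "D > 0" using copn by (simp add: D_def)
  have c1: "[2^r = 1] (mod D)" using cyc eq by blast
  have oddD: "odd D"
  proof
    assume "even D"
    then have "[(2::nat)^r = 1] (mod 2)" by (rule cong_dvd_modulus_nat[OF c1])
    moreover have "(2::nat)^r mod 2 = 0" using r by simp
    ultimately show False by (simp add: cong_def)
  qed
  have copD: "coprime D 2" using oddD by simp
  define q where "q = ord D 2"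
  have "q dvd r" using c1 ord_divides by (simp add: q_def)
  then have "q \<le> r" using r by (simp add: dvd_imp_le)
  moreover have "q > 0" using copD by (simp add: q_def)
  moreover have "[2^q = 1] (mod D)" using ord[of 2 D] by (simp add: q_def)
  ultimately have ordr: "ord D 2 = r" using notcyc eq q_def by (metis le_neq_implies_less)
  have "D dvd totient n" using order_divides_totient[OF copn] by (simp add: D_def)
  then have "D dvd 2^\<theta> * \<mu>" using tot by simp
  moreover have "coprime D (2^\<theta>)" using copD by simp
  ultimately have "D dvd \<mu>" using coprime_dvd_mult_right_iff by blast
  obtain d where "triggering_divisor d r" "d dvd D" using trig_exists[OF Dpos oddD ordr] by blast
  then show ?thesis using \<open>D dvd \<mu>\<close> dvd_trans by blast
qed

fun wv :: "nat list \<Rightarrow> nat" where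
  "wv [] = 0" | "wv (a # xs) = a + 2 * wv xs"

definition sv :: "nat \<Rightarrow> nat list \<Rightarrow> nat" where
  "sv t xs = 2^(t - length xs) * wv xs"

lemma wv_append: "wv (xs @ [b]) = wv xs + b * 2^length xs"
  by (induction xs) (simp_all add: algebra_simps)

lemma wv_lt: "\<forall>a\<in>set xs. a < 2 \<Longrightarrow> wv xs < 2^length xs"
  by (induction xs) auto

lemma wv_odd: "xs \<noteq> [] \<Longrightarrow> hd xs = 1 \<Longrightarrow> odd (wv xs)"
  by (cases xs) auto

lemma wv_inj: "length xs = length ys \<Longrightarrow> \<forall>a\<in>set xs. a < 2 \<Longrightarrow> \<forall>a\<in>set ys. a < 2
   \<Longrightarrow> wv xs = wv ys \<Longrightarrow> xs = ys"
proof (induction xs arbitrary: ys)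
  case Nil then show ?case by simp
next
  case (Cons a xs)
  then obtain b ys' where ys: "ys = b # ys'" by (cases ys) auto
  have "a + 2 * wv xs = b + 2 * wv ys'" using Cons.prems ys by simp
  moreover have "a < 2" "b < 2" using Cons.prems ys by auto
  ultimately have "a = b" "wv xs = wv ys'" by presburger+
  then show ?case using Cons ys by auto
qed

lemma V_hd: "xs \<in> reg_tree_vertices 2 t \<Longrightarrow> xs \<noteq> [] \<Longrightarrow> hd xs = 1"
proof -
  assume a: "xs \<in> reg_tree_vertices 2 t" "xs \<noteq> []"
  then have "hd xs \<in> set xs" by simp
  then show ?thesis using a unfolding reg_tree_vertices_def by fastforce
qed

lemma V_elts: "xs \<in> reg_tree_vertices 2 t \<Longrightarrow> \<forall>a\<in>set xs. a < 2"
  by (cases "xs = []") (auto simp: reg_tree_vertices_def)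

lemma V_len: "xs \<in> reg_tree_vertices 2 t \<Longrightarrow> length xs \<le> t"
  by (auto simp: reg_tree_vertices_def)

lemma sv_lt: "xs \<in> reg_tree_vertices 2 t \<Longrightarrow> sv t xs < 2^t"
proof -
  assume V: "xs \<in> reg_tree_vertices 2 t"
  have "wv xs < 2^length xs" using wv_lt V_elts[OF V] by blast
  then have "2^(t - length xs) * wv xs < 2^(t - length xs) * 2^length xs" by simp
  also have "\<dots> = 2^t" using V_len[OF V] by (simp add: power_add[symmetric])
  finally show ?thesis by (simp add: sv_def)
qed

lemma sv_nil [simp]: "sv t [] = 0" by (simp add: sv_def)

lemma sv_succ:
  assumes V: "xs \<in> reg_tree_vertices 2 t" and ne: "xs \<noteq> []"
  shows "[2 * sv t xs = sv t (butlast xs)] (mod 2^t)"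
proof -
  obtain ys b where xs: "xs = ys @ [b]" using ne by (metis append_butlast_last_id)
  have L: "length ys + 1 \<le> t" using V_len[OF V] xs by simp
  have e: "t - length ys = Suc (t - (length ys + 1))" using L by simp
  have "2 * sv t xs = 2^(t - length ys) * wv ys + b * 2^(Suc (t - (length ys + 1)) + length ys)"
    by (simp add: sv_def xs wv_append e algebra_simps power_add)
  also have "Suc (t - (length ys + 1)) + length ys = t" using L by simp
  finally have "2 * sv t xs = sv t ys + b * 2^t" by (simp add: sv_def)
  then show ?thesis using xs by (simp add: cong_def)
qed

lemma pow2_odd_eq: "odd (a::nat) \<Longrightarrow> odd b \<Longrightarrow> 2^i * a = 2^j * b \<Longrightarrow> i = j \<and> a = b"
proof -
  assume a: "odd a" and b: "odd b" and e: "2^i * a = 2^j * b"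
  have "i = j"
  proof (rule ccontr)
    assume "i \<noteq> j"
    then consider "i < j" | "j < i" by linarith
    then show False
    proof cases
      case 1
      have "(2::nat)^j = 2^i * 2^(j-i)" using 1 by (simp add: power_add[symmetric])
      then have "2^i * a = 2^i * (2^(j-i) * b)" using e by (metis mult.assoc)
      then have "a = 2^(j-i) * b" by simp
      then show False using a 1 by simp
    next
      case 2
      have "(2::nat)^i = 2^j * 2^(i-j)" using 2 by (simp add: power_add[symmetric])
      then have "2^j * b = 2^j * (2^(i-j) * a)" using e by (metis mult.assoc)
      then have "b = 2^(i-j) * a" by simp
      then show False using b 2 by simp
    qed
  qed
  then show ?thesis using e by simp
qed

lemma sv_inj:
  assumes V: "xs \<in> reg_tree_vertices 2 t" "ys \<in> reg_tree_vertices 2 t" and e: "sv t xs = sv t ys"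
  shows "xs = ys"
proof -
  have pos: "sv t zs > 0" if "zs \<in> reg_tree_vertices 2 t" "zs \<noteq> []" for zs
  proof -
    have "odd (wv zs)" using wv_odd V_hd that by blast
    then show ?thesis by (simp add: sv_def odd_pos)
  qed
  show ?thesis
  proof (cases "xs = [] \<or> ys = []")
    case True then show ?thesis using pos V e by (metis less_numeral_extra(3) sv_nil)
  next
    case False
    have o1: "odd (wv xs)" "odd (wv ys)" using wv_odd V_hd V False by blast+
    have "t - length xs = t - length ys \<and> wv xs = wv ys"
      using pow2_odd_eq[OF o1] e by (simp add: sv_def)
    moreover have "length xs \<le> t" "length ys \<le> t" using V_len V by blast+
    ultimately have "length xs = length ys" "wv xs = wv ys" by auto
    then show ?thesis using wv_inj V_elts V by blast
  qed
qed

lemma sv_leaf_odd: "xs \<in> reg_tree_vertices 2 t \<Longrightarrow> length xs = t \<Longrightarrow> t \<ge> 1 \<Longrightarrow> odd (sv t xs)"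
proof -
  assume a: "xs \<in> reg_tree_vertices 2 t" "length xs = t" "t \<ge> 1"
  then have "xs \<noteq> []" by auto
  then have "odd (wv xs)" using wv_odd V_hd a by blast
  then show ?thesis using a by (simp add: sv_def)
qed

lemma cong_coprime_split:
  fixes a b m1 m2 :: nat
  assumes "coprime m1 m2"
  shows "[a = b] (mod m1 * m2) \<longleftrightarrow> [a = b] (mod m1) \<and> [a = b] (mod m2)"
  using assms coprime_cong_mult_nat cong_dvd_modulus_nat by (meson dvd_triv_left dvd_triv_right)

lemma key:
  fixes \<mu> c d r t s s' a a' :: nat
  assumes odd: "odd \<mu>" and mu: "\<mu> = c * d" and ordr: "ord d 2 = r" and oddd: "odd d"
  shows "[\<mu>*s + 2^t*c*2^a = \<mu>*s' + 2^t*c*2^a'] (mod 2^t*\<mu>) \<longleftrightarrow> [s = s'] (mod 2^t) \<and> [a = a'] (mod r)"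
proof -
  have cop: "coprime (2^t) \<mu>" using odd by simp
  have c0: "c > 0" using odd mu by (cases "c = 0") auto
  have A: "[\<mu>*s + 2^t*c*2^a = \<mu>*s' + 2^t*c*2^a'] (mod 2^t) \<longleftrightarrow> [s = s'] (mod 2^t)"
  proof -
    have "[\<mu>*s + 2^t*c*2^a = \<mu>*s' + 2^t*c*2^a'] (mod 2^t) \<longleftrightarrow> [\<mu>*s = \<mu>*s'] (mod 2^t)"
      by (simp add: cong_def mult.assoc)
    also have "\<dots> \<longleftrightarrow> [s = s'] (mod 2^t)"
      using cop by (simp add: cong_mult_lcancel_nat coprime_commute)
    finally show ?thesis .
  qed
  have B: "[\<mu>*s + 2^t*c*2^a = \<mu>*s' + 2^t*c*2^a'] (mod \<mu>) \<longleftrightarrow> [a = a'] (mod r)"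
  proof -
    have "[\<mu>*s + 2^t*c*2^a = \<mu>*s' + 2^t*c*2^a'] (mod \<mu>) \<longleftrightarrow> [2^t*(c*2^a) = 2^t*(c*2^a')] (mod \<mu>)"
      by (simp add: cong_def mult.assoc)
    also have "\<dots> \<longleftrightarrow> [c*2^a = c*2^a'] (mod c*d)"
      using cop by (simp add: cong_mult_lcancel_nat mu)
    also have "\<dots> \<longleftrightarrow> [2^a = 2^a'] (mod d)"
      using c0 by (simp add: cong_def mod_mult_mult1)
    also have "\<dots> \<longleftrightarrow> [a = a'] (mod r)"
      using order_divides_expdiff[of d 2 a a'] oddd ordr by simp
    finally show ?thesis .
  qed
  show ?thesis using A B cong_coprime_split[OF cop] by blast
qed



definition av :: "nat \<Rightarrow> nat \<times> nat list \<Rightarrow> nat" where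
  "av r u = fst u + (r - 1) * length (snd u)"

definition Ev :: "nat \<Rightarrow> nat \<Rightarrow> nat \<Rightarrow> nat \<Rightarrow> nat \<times> nat list \<Rightarrow> nat" where
  "Ev \<mu> t c r u = \<mu> * sv t (snd u) + 2^t * c * 2^(av r u)"

lemma av_succ:
  assumes r: "r \<ge> 1" shows "[av r u + 1 = av r (fsucc r u)] (mod r)"
proof (cases "snd u = []")
  case True
  then show ?thesis by (simp add: av_def fsucc_def cong_def)
next
  case False
  then obtain L where L: "length (snd u) = Suc L" by (cases "snd u") auto
  obtain r' where r': "r = Suc r'" using r by (cases r) auto
  have "av r u + 1 = av r (fsucc r u) + r"
    using False L by (simp add: av_def fsucc_def algebra_simps r')
  then show ?thesis by (simp add: cong_def)
qed

lemma E_succ: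
  assumes odd: "odd \<mu>" and mu: "\<mu> = c * d" and ordr: "ord d 2 = r" and oddd: "odd d"
    and r: "r \<ge> 1" and u: "u \<in> {0..<r} \<times> reg_tree_vertices 2 t"
  shows "[2 * Ev \<mu> t c r u = Ev \<mu> t c r (fsucc r u)] (mod 2^t*\<mu>)"
proof -
  have eq2: "2 * Ev \<mu> t c r u = \<mu> * (2 * sv t (snd u)) + 2^t*c*2^(av r u + 1)"
    by (simp add: Ev_def algebra_simps)
  have s: "[2 * sv t (snd u) = sv t (snd (fsucc r u))] (mod 2^t)"
  proof (cases "snd u = []")
    case True then show ?thesis by (simp add: fsucc_def)
  next
    case False
    then show ?thesis using sv_succ[of "snd u" t] u by (auto simp: fsucc_def)
  qed
  show ?thesis unfolding eq2 Ev_def[of _ _ _ _ "fsucc r u"]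
    using key[OF odd mu ordr oddd] s av_succ[OF r, of u] by blast
qed

lemma E_inj:
  assumes odd: "odd \<mu>" and mu: "\<mu> = c * d" and ordr: "ord d 2 = r" and oddd: "odd d"
    and u: "u \<in> {0..<r} \<times> reg_tree_vertices 2 t" and v: "v \<in> {0..<r} \<times> reg_tree_vertices 2 t"
    and e: "[Ev \<mu> t c r u = Ev \<mu> t c r v] (mod 2^t*\<mu>)"
  shows "u = v"
proof -
  have "[sv t (snd u) = sv t (snd v)] (mod 2^t) \<and> [av r u = av r v] (mod r)"
    using e key[OF odd mu ordr oddd] unfolding Ev_def by blast
  then have c1: "[sv t (snd u) = sv t (snd v)] (mod 2^t)" and c2: "[av r u = av r v] (mod r)" by auto
  have "sv t (snd u) = sv t (snd v)"
    using cong_less_imp_eq_nat[OF _ sv_lt _ sv_lt c1] u v by auto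
  then have sn: "snd u = snd v" using sv_inj u v by auto
  then have "[fst u = fst v] (mod r)" using c2 unfolding av_def
    by (metis cong_add_rcancel_nat)
  then have "fst u = fst v" using cong_less_imp_eq_nat u v by auto
  then show ?thesis using sn by (simp add: prod_eq_iff)
qed

lemma preds:
  assumes t: "t \<ge> 1" and r: "r \<ge> 1" and u: "u \<in> {0..<r} \<times> reg_tree_vertices 2 t"
    and len: "length (snd u) < t"
  shows "\<exists>v1 v2. v1 \<in> {0..<r} \<times> reg_tree_vertices 2 t \<and> v2 \<in> {0..<r} \<times> reg_tree_vertices 2 t
     \<and> v1 \<noteq> v2 \<and> fsucc r v1 = u \<and> fsucc r v2 = u"
proof -
  obtain i xs where ixs: "u = (i, xs)" by (cases u)
  have i: "i < r" and V: "xs \<in> reg_tree_vertices 2 t" using u ixs by auto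
  show ?thesis
  proof (cases "xs = []")
    case True
    define v1 where "v1 = ((i + r - 1) mod r, [] :: nat list)"
    define v2 where "v2 = (i, [1::nat])"
    have "v1 \<in> {0..<r} \<times> reg_tree_vertices 2 t" using r by (simp add: v1_def nil_in_V)
    moreover have "v2 \<in> {0..<r} \<times> reg_tree_vertices 2 t" using t i by (simp add: v2_def reg_tree_vertices_def)
    moreover have "v1 \<noteq> v2" by (simp add: v1_def v2_def)
    moreover have "fsucc r v1 = u"
    proof -
      have "((i + r - 1) mod r + 1) mod r = (i + r - 1 + 1) mod r" by (rule mod_add_left_eq)
      also have "i + r - 1 + 1 = i + r" using r by simp
      finally show ?thesis using i True ixs by (simp add: fsucc_def v1_def)
    qed
    moreover have "fsucc r v2 = u" using True ixs by (simp add: fsucc_def v2_def)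
    ultimately show ?thesis by blast
  next
    case False
    define v1 where "v1 = (i, xs @ [0])"
    define v2 where "v2 = (i, xs @ [1])"
    have inV: "xs @ [b] \<in> reg_tree_vertices 2 t" if "b < 2" for b
      using V False len ixs that by (auto simp: reg_tree_vertices_def)
    have "v1 \<in> {0..<r} \<times> reg_tree_vertices 2 t" using inV[of 0] i by (simp add: v1_def)
    moreover have "v2 \<in> {0..<r} \<times> reg_tree_vertices 2 t" using inV[of 1] i by (simp add: v2_def)
    moreover have "v1 \<noteq> v2" by (simp add: v1_def v2_def)
    moreover have "fsucc r v1 = u" "fsucc r v2 = u" using ixs by (simp_all add: fsucc_def v1_def v2_def)
    ultimately show ?thesis by blast
  qed
qed

lemma conn:
  assumes r: "r \<ge> 1" and u: "u \<in> {0..<r} \<times> reg_tree_vertices 2 t"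
  shows "(u, (0, [])) \<in> {(u, fsucc r u) | u. u \<in> {0..<r} \<times> reg_tree_vertices 2 t}\<^sup>*"
proof -
  define S where "S = {(u, fsucc r u) | u. u \<in> {0..<r} \<times> reg_tree_vertices 2 t}"
  have a: "((i, xs), (i, [])) \<in> S\<^sup>*" if "i < r" "xs \<in> reg_tree_vertices 2 t" for i xs
    using that(2)
  proof (induction xs rule: rev_induct)
    case Nil then show ?case by simp
  next
    case (snoc b ys)
    have "ys \<in> reg_tree_vertices 2 t" using butlast_in_V[OF snoc.prems] by simp
    then have "((i, ys), (i, [])) \<in> S\<^sup>*" using snoc.IH by blast
    moreover have "((i, ys @ [b]), (i, ys)) \<in> S"
      unfolding S_def using snoc.prems that(1) by (force simp: fsucc_def)
    ultimately show ?case by (meson converse_rtrancl_into_rtrancl)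
  qed
  have b: "((i, []), ((i + m) mod r, [])) \<in> S\<^sup>*" if "i < r" for i m
  proof (induction m)
    case 0 then show ?case using that by simp
  next
    case (Suc m)
    have "(((i + m) mod r, []), (((i + m) mod r + 1) mod r, [])) \<in> S"
      unfolding S_def using r nil_in_V[of 2 t] by (force simp: fsucc_def)
    moreover have "((i + m) mod r + 1) mod r = (i + Suc m) mod r" by (simp add: mod_Suc_eq)
    ultimately show ?case using Suc by (metis rtrancl.rtrancl_into_rtrancl)
  qed
  obtain i xs where ixs: "u = (i, xs)" by (cases u)
  have i: "i < r" and V: "xs \<in> reg_tree_vertices 2 t" using u ixs by auto
  have "((i, []), ((i + (r - i)) mod r, [])) \<in> S\<^sup>*" using b[OF i] .
  moreover have "(i + (r - i)) mod r = 0" using i by simp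
  ultimately have "((i, []), (0, [])) \<in> S\<^sup>*" by simp
  then show ?thesis using a[OF i V] ixs unfolding S_def[symmetric] by (meson rtrancl_trans)
qed



lemma sqrt_pm:
  fixes p k z w :: nat
  assumes p: "prime p" "odd p" and k: "k \<ge> 1" and cz: "coprime z (p^k)"
    and e: "[z^2 = w^2] (mod p^k)"
  shows "[z = w] (mod p^k) \<or> [z + w = 0] (mod p^k)"
proof -
  define P where "P = int p"
  define Z where "Z = int z"
  define Wi where "Wi = int w"
  have pP: "prime P" using p by (simp add: P_def)
  have "[Z^2 = Wi^2] (mod P^k)" using e cong_int_iff[of "z^2" "w^2" "p^k"]
    by (simp add: P_def Z_def Wi_def)
  then have dv: "P^k dvd (Z - Wi) * (Z + Wi)"
    by (simp add: cong_iff_dvd_diff power2_eq_square algebra_simps)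
  have notboth: "\<not> (P dvd Z - Wi \<and> P dvd Z + Wi)"
  proof
    assume a: "P dvd Z - Wi \<and> P dvd Z + Wi"
    then have d1: "P dvd (Z - Wi) + (Z + Wi)" by (meson dvd_add)
    have "(Z - Wi) + (Z + Wi) = 2 * Z" by simp
    then have "P dvd 2 * Z" using d1 by metis
    then have "P dvd 2 \<or> P dvd Z" using pP prime_dvd_mult_iff by blast
    then show False
    proof
      assume "P dvd 2"
      then have "int p dvd int 2" by (simp add: P_def)
      then have "p dvd 2" by (simp only: of_nat_dvd_iff)
      then have "p \<le> 2" by (simp add: dvd_imp_le)
      moreover have "p \<ge> 2" using p prime_ge_2_nat by blast
      ultimately show False using p by auto
    next
      assume "P dvd Z"
      then have "int p dvd int z" by (simp add: P_def Z_def)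
      then have "p dvd z" by (simp only: of_nat_dvd_iff)
      moreover have "p dvd p^k" using k by (simp add: dvd_power)
      ultimately have "p dvd gcd z (p^k)" by simp
      moreover have "gcd z (p^k) = 1" using cz by (rule coprime_imp_gcd_eq_1)
      ultimately have "p dvd 1" by simp
      then have "p = 1" by simp
      then show False using p by simp
    qed
  qed
  show ?thesis
  proof (cases "P dvd Z - Wi")
    case False
    then have "coprime P (Z - Wi)" using pP prime_imp_coprime by blast
    then have "coprime (P^k) (Z - Wi)" by simp
    then have "P^k dvd Z + Wi" using dv coprime_dvd_mult_right_iff by blast
    then have "int (p^k) dvd int (z + w)" by (simp add: P_def Z_def Wi_def)
    then have "p^k dvd z + w" by (simp only: of_nat_dvd_iff)
    then show ?thesis by (simp add: cong_0_iff)
  next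
    case True
    then have "\<not> P dvd Z + Wi" using notboth by blast
    then have "coprime P (Z + Wi)" using pP prime_imp_coprime by blast
    then have "coprime (P^k) (Z + Wi)" by simp
    then have "P^k dvd Z - Wi" using dv coprime_dvd_mult_left_iff by blast
    then have "[Z = Wi] (mod P^k)" by (simp add: cong_iff_dvd_diff)
    then have "[int z = int w] (mod int (p^k))" by (simp add: P_def Z_def Wi_def)
    then have "[z = w] (mod p^k)" by (simp only: cong_int_iff)
    then show ?thesis by blast
  qed
qed

lemma sq_unit: "coprime x n \<Longrightarrow> coprime (x^2 mod n) (n::nat)"
  by (metis coprime_mod_left_iff coprime_power_left_iff gcd_nat.absorb_iff2 gcd_nat.simps(1)
        mod_by_0 mod_div_trivial nat_dvd_not_less not_gr_zero)



lemma backward: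
  fixes p k \<theta> \<mu> r d :: nat
  assumes p: "prime p" "odd p" and k: "k \<ge> 1" and tot: "totient (p^k) = 2^\<theta>*\<mu>"
    and odd: "odd \<mu>" and r: "r \<ge> 1" and trig: "triggering_divisor d r" and dmu: "d dvd \<mu>"
  shows "has_component_iso (unit_graph (p^k)) (flower_cycle r (reg_tree 2 \<theta>))"
proof -
  define n where "n = p^k"
  have p2: "p > 2" using p prime_ge_2_nat[of p] by (metis dvd_refl le_neq_implies_less)
  have "p \<le> p^k" using k p2 by (simp add: self_le_power)
  then have n2: "n > 2" using p2 by (simp add: n_def)
  have t1: "\<theta> \<ge> 1"
  proof (rule ccontr)
    assume "\<not> \<theta> \<ge> 1"
    then have "\<theta> = 0" by simp
    then have "odd (totient n)" using tot odd by (simp add: n_def)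
    then show False using totient_even[OF n2] by simp
  qed
  obtain g where g: "\<forall>k>0. residue_primroot (p ^ k) g"
    using residue_primroot_odd_prime_power_exists[OF p] by blast
  then have gn: "residue_primroot n g" using k by (simp add: n_def)
  then have ordg: "ord n g = 2^\<theta>*\<mu>" and copg: "coprime n g"
    using tot by (auto simp: residue_primroot_def n_def)
  have d0: "d > 0" and oddd: "odd d" and ordr: "ord d 2 = r"
    using trig by (auto simp: triggering_divisor_def)
  obtain c where mu: "\<mu> = c * d" using dmu by (metis dvd_def mult.commute)
  define E where "E = Ev \<mu> \<theta> c r"
  define h where "h u = g^(E u) mod n" for u
  define W where "W = {0..<r} \<times> reg_tree_vertices 2 \<theta>"
  define U where "U = {x. x < n \<and> coprime x n}"
  define f where "f x = x^2 mod n" for x :: nat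
  have heq: "g^a mod n = g^b mod n \<longleftrightarrow> [a = b] (mod 2^\<theta>*\<mu>)" for a b
    using order_divides_expdiff[OF copg, of a b] ordg by (simp add: cong_def)
  have G: "unit_graph n = (U, {(x, f x) | x. x \<in> U})"
    using unit_graph_eq[of n] by (simp add: U_def f_def)
  have H: "flower_cycle r (reg_tree 2 \<theta>) = (W, {(u, fsucc r u) | u. u \<in> W})"
    using flower_fst[of r \<theta>] flower_snd[of r \<theta>] W_def by (metis prod.collapse)
  have fU: "\<forall>x\<in>U. f x \<in> U" using n2 sq_unit by (auto simp: U_def f_def)
  have scW: "\<forall>u\<in>W. fsucc r u \<in> W" using fsucc_in by (simp add: W_def)
  have inj: "inj_on h W"
  proof (rule inj_onI)
    fix u v assume "u \<in> W" "v \<in> W" "h u = h v"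
    then show "u = v" using E_inj[OF odd mu ordr oddd] heq by (simp add: h_def E_def W_def)
  qed
  have hU: "h ` W \<subseteq> U"
  proof
    fix y assume "y \<in> h ` W"
    then obtain u where y: "y = g^(E u) mod n" by (auto simp: h_def)
    have "coprime g n" using copg by (simp add: coprime_commute)
    then have "coprime (g^(E u)) n" by simp
    moreover have "n \<noteq> 0" using n2 by simp
    ultimately have "coprime y n" using y coprime_mod_left_iff by blast
    moreover have "y < n" using y n2 by simp
    ultimately show "y \<in> U" by (simp add: U_def)
  qed
  have hs: "\<forall>u\<in>W. h (fsucc r u) = f (h u)"
  proof
    fix u assume u: "u \<in> W"
    have "f (h u) = (g^(E u))^2 mod n" by (simp add: f_def h_def power_mod)
    also have "(g^(E u))^2 = g^(2 * E u)" by (simp add: power_mult[symmetric] mult.commute)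
    also have "g^(2 * E u) mod n = g^(E (fsucc r u)) mod n"
      using heq E_succ[OF odd mu ordr oddd r] u by (simp add: E_def W_def)
    finally show "h (fsucc r u) = f (h u)" by (simp add: h_def)
  qed
  have u0: "(0, []) \<in> W" using r nil_in_V by (simp add: W_def)
  have cn: "\<forall>u\<in>W. (u, (0, [])) \<in> {(u, fsucc r u) | u. u \<in> W}\<^sup>*"
    using conn[OF r] by (simp add: W_def)
  have pred: "\<forall>u\<in>W. \<forall>z\<in>U. f z = h u \<longrightarrow> z \<in> h ` W"
  proof (intro ballI impI)
    fix u z assume u: "u \<in> W" and z: "z \<in> U" and fz: "f z = h u"
    obtain i xs where ixs: "u = (i, xs)" by (cases u)
    have V: "xs \<in> reg_tree_vertices 2 \<theta>" using u ixs by (simp add: W_def)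
    have "length xs \<le> \<theta>" using V_len[OF V] .
    then consider "length xs = \<theta>" | "length xs < \<theta>" by linarith
    then show "z \<in> h ` W"
    proof cases
      case 1
      have "z \<noteq> 0"
      proof
        assume "z = 0"
        then have "coprime 0 n" using z by (simp add: U_def)
        then show False using n2 by simp
      qed
      then have "z \<in> totatives n" using z by (auto simp: U_def totatives_def coprime_commute)
      then obtain f0 where f0: "z = g^f0 mod n"
        using residue_primroot_is_generator[OF _ gn] n2 by (auto simp: bij_betw_def)
      have "f z = (g^f0)^2 mod n" by (simp add: f_def f0 power_mod)
      also have "(g^f0)^2 = g^(2*f0)" by (simp add: power_mult[symmetric] mult.commute)
      finally have "g^(2*f0) mod n = g^(E u) mod n" using fz by (simp add: h_def)
      then have "[2*f0 = E u] (mod 2^\<theta>*\<mu>)" using heq by simp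
      moreover have "2 dvd 2^\<theta>*\<mu>" using t1 by (simp add: dvd_power)
      ultimately have "[2*f0 = E u] (mod 2)" using cong_dvd_modulus_nat by blast
      then have "E u mod 2 = 0" by (simp add: cong_def)
      then have ev: "even (E u)" by presburger
      have "odd (sv \<theta> xs)" using sv_leaf_odd[OF V 1 t1] .
      then have "odd (\<mu> * sv \<theta> xs)" using odd by simp
      moreover have "even (2^\<theta> * c * 2 ^ av r u)" using t1 by simp
      ultimately have "odd (E u)" by (simp add: E_def Ev_def ixs)
      then show ?thesis using ev by simp
    next
      case 2
      obtain v1 v2 where v: "v1 \<in> W" "v2 \<in> W" "v1 \<noteq> v2" "fsucc r v1 = u" "fsucc r v2 = u"
        using preds[OF t1 r, of u] u 2 ixs by (auto simp: W_def)
      have hv1: "f (h v1) = h u" and hv2: "f (h v2) = h u" using hs v by metis+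
      have U1: "h v1 \<in> U" and U2: "h v2 \<in> U" using hU v by auto
      have "[z^2 = (h v1)^2] (mod n)" using fz hv1 by (simp add: f_def cong_def)
      moreover have cz: "coprime z (p^k)" using z by (simp add: U_def n_def)
      ultimately have zc: "[z = h v1] (mod n) \<or> [z + h v1 = 0] (mod n)"
        using sqrt_pm[OF p k] by (simp add: n_def)
      have "[(h v2)^2 = (h v1)^2] (mod n)" using hv1 hv2 by (simp add: f_def cong_def)
      moreover have "coprime (h v2) (p^k)" using U2 by (simp add: U_def n_def)
      ultimately have vc: "[h v2 = h v1] (mod n) \<or> [h v2 + h v1 = 0] (mod n)"
        using sqrt_pm[OF p k] by (simp add: n_def)
      have "h v2 \<noteq> h v1"
      proof
        assume "h v2 = h v1"
        then have "v2 = v1" using inj_onD[OF inj _ v(2) v(1)] by blast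
        then show False using v(3) by simp
      qed
      then have "\<not> [h v2 = h v1] (mod n)" using U1 U2 cong_less_imp_eq_nat by (auto simp: U_def)
      then have vc2: "[h v2 + h v1 = 0] (mod n)" using vc by blast
      from zc show ?thesis
      proof
        assume "[z = h v1] (mod n)"
        then have "z = h v1" using z U1 cong_less_imp_eq_nat by (auto simp: U_def)
        then show ?thesis using v by blast
      next
        assume "[z + h v1 = 0] (mod n)"
        then have "[z + h v1 = h v2 + h v1] (mod n)" using vc2 by (meson cong_sym cong_trans)
        then have "[z = h v2] (mod n)" by (simp add: cong_add_rcancel_nat)
        then have "z = h v2" using z U2 cong_less_imp_eq_nat by (auto simp: U_def)
        then show ?thesis using v by blast
      qed
    qed
  qed
  have "has_component_iso (unit_graph n) (flower_cycle r (reg_tree 2 \<theta>))"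
    by (rule comp_iso[OF G fU H scW inj hU hs u0 cn pred])
  then show ?thesis by (simp add: n_def)
qed



theorem corollary14:
  fixes p k \<theta> \<mu> r :: nat
  assumes "prime p" and "odd p" and "k \<ge> 1"
    and "totient (p ^ k) = 2 ^ \<theta> * \<mu>" and "odd \<mu>"
    and "r \<ge> 1"
  shows "has_component_iso (unit_graph (p ^ k)) (flower_cycle r (reg_tree 2 \<theta>))
         \<longleftrightarrow> (\<exists>d. triggering_divisor d r \<and> d dvd \<mu>)"
proof
  assume "\<exists>d. triggering_divisor d r \<and> d dvd \<mu>"
  then show "has_component_iso (unit_graph (p ^ k)) (flower_cycle r (reg_tree 2 \<theta>))"
    using backward[OF assms(1-6)] by blast
next
  assume iso: "has_component_iso (unit_graph (p ^ k)) (flower_cycle r (reg_tree 2 \<theta>))"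
  define n where "n = p^k"
  define U where "U = {x. x < n \<and> coprime x n}"
  have G: "unit_graph n = (U, {(x, (\<lambda>x. x^2 mod n) x) | x. x \<in> U})"
    using unit_graph_eq[of n] by (simp add: U_def)
  have roots: "\<forall>i<r. (i, []) \<in> fst (flower_cycle r (reg_tree 2 \<theta>))
      \<and> ((i, []), ((i+1) mod r, [])) \<in> snd (flower_cycle r (reg_tree 2 \<theta>))"
  proof (intro allI impI conjI)
    fix i assume i: "i < r"
    then show "(i, []) \<in> fst (flower_cycle r (reg_tree 2 \<theta>))"
      by (simp add: flower_fst nil_in_V)
    have mem: "(i, []) \<in> {0..<r} \<times> reg_tree_vertices 2 \<theta>" using i nil_in_V[of 2 \<theta>] by simp
    have "\<exists>u. ((i, []), fsucc r (i, [])) = (u, fsucc r u) \<and> u \<in> {0..<r} \<times> reg_tree_vertices 2 \<theta>"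
      by (rule exI[where x="(i, [])"]) (rule conjI[OF refl mem])
    then have "((i, []), fsucc r (i, [])) \<in> snd (flower_cycle r (reg_tree 2 \<theta>))"
      unfolding flower_snd by (simp only: mem_Collect_eq)
    then show "((i, []), ((i+1) mod r, [])) \<in> snd (flower_cycle r (reg_tree 2 \<theta>))"
      by (simp add: fsucc_def)
  qed
  have rinj: "inj_on (\<lambda>i. (i, [] :: nat list)) {0..<r}" by (simp add: inj_on_def)
  obtain x where x: "x \<in> U" and cyc: "((\<lambda>x. x^2 mod n)^^r) x = x"
    and nc: "\<forall>j. 0<j \<and> j<r \<longrightarrow> ((\<lambda>x. x^2 mod n)^^j) x \<noteq> x"
    using comp_cycle[OF G _ assms(6) roots rinj] iso by (auto simp: n_def)
  have xn: "x < n" and cop: "coprime x n" using x by (auto simp: U_def)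
  have cyc': "[x^(2^r) = x] (mod n)"
    using cyc iter_sq[where n=n and j=r and x=x] assms(6) xn by (simp add: cong_def)
  have nc': "\<forall>j. 0<j \<and> j<r \<longrightarrow> \<not>[x^(2^j) = x] (mod n)"
    using nc iter_sq[where n=n and x=x] xn by (auto simp: cong_def)
  have tot': "totient n = 2^\<theta>*\<mu>" using assms(4) by (simp add: n_def)
  show "\<exists>d. triggering_divisor d r \<and> d dvd \<mu>"
    by (rule nt_forward[OF cop assms(6) cyc' nc' tot'])
qed


end
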